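(* Let $S$ be a left adequate semigroup with an adequate transversal $S^0$. Then for all $x\in S$, $f_x=f_{\bar x}$, and so $x=e_x\bar x$.
   Context: For a semigroup $S$, $\mathcal{R}^\ast=\{(a,b): \text{for all } x,y\in S^1,\ xa=ya \iff xb=yb\}$ and $\mathcal{L}^\ast$ is defined dually. $S$ is abundant if every $\mathcal{R}^\ast$-class and every $\mathcal{L}^\ast$-class contains an idempotent; adequate if abundant and its idempotents commute; left adequate if abundant and every $\mathcal{R}^\ast$-class contains a unique idempotent. In an adequate semigroup $a^+,a^\ast$ denote the unique idempotents in the $\mathcal{R}^\ast$-, resp. $\mathcal{L}^\ast$-class of $a$. A subsemigroup $U$ of abundant $S$ is a $\ast$-subsemigroup if $U$ is abundant and $\mathcal{L}^\ast_U=\mathcal{L}^\ast_S\cap(U\times U)$, $\mathcal{R}^\ast_U=\mathcal{R}^\ast_S\cap(U\times U)$. An adequate $\ast$-subsemigroup $S^0$ of abundant $S$ is an adequate transversal if for each $x\in S$ there is a unique $\bar x\in S^0$ and idempotents $e,f$ of $S$ with $x=e\bar xf$, $e\,\mathcal{L}\,\bar x^+$, $f\,\mathcal{R}\,\bar x^\ast$; these $e,f$ are uniquely determined and denoted $e_x,f_x$. *)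

theory Defs
  imports Main
begin

text \<open>The semigroup S is the whole type 'a (class semigroup_mult); subsets U of it
carry the restricted structure. S^1 is modelled by 'a option, None being the
adjoined identity.\<close>

definition idem :: "'a::semigroup_mult \<Rightarrow> bool" where
  "idem e \<longleftrightarrow> e * e = e"

fun lmul :: "'a::semigroup_mult option \<Rightarrow> 'a \<Rightarrow> 'a" where
  "lmul None a = a"
| "lmul (Some x) a = x * a"

fun rmul :: "'a::semigroup_mult \<Rightarrow> 'a option \<Rightarrow> 'a" where
  "rmul a None = a"
| "rmul a (Some x) = a * x"

definition one_ext :: "'a set \<Rightarrow> 'a option set" where
  "one_ext U = insert None (Some ` U)"

definition Rstar :: "'a::semigroup_mult set \<Rightarrow> 'a \<Rightarrow> 'a \<Rightarrow> bool" where
  "Rstar U a b \<longleftrightarrow> a \<in> U \<and> b \<in> U \<and>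
     (\<forall>x\<in>one_ext U. \<forall>y\<in>one_ext U. lmul x a = lmul y a \<longleftrightarrow> lmul x b = lmul y b)"

definition Lstar :: "'a::semigroup_mult set \<Rightarrow> 'a \<Rightarrow> 'a \<Rightarrow> bool" where
  "Lstar U a b \<longleftrightarrow> a \<in> U \<and> b \<in> U \<and>
     (\<forall>x\<in>one_ext U. \<forall>y\<in>one_ext U. rmul a x = rmul a y \<longleftrightarrow> rmul b x = rmul b y)"

definition greenL :: "'a::semigroup_mult \<Rightarrow> 'a \<Rightarrow> bool" where
  "greenL a b \<longleftrightarrow> (\<exists>u v. a = lmul u b \<and> b = lmul v a)"

definition greenR :: "'a::semigroup_mult \<Rightarrow> 'a \<Rightarrow> bool" where
  "greenR a b \<longleftrightarrow> (\<exists>u v. a = rmul b u \<and> b = rmul a v)"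

definition subsemigroup :: "'a::semigroup_mult set \<Rightarrow> bool" where
  "subsemigroup U \<longleftrightarrow> (\<forall>a\<in>U. \<forall>b\<in>U. a * b \<in> U)"

definition abundant :: "'a::semigroup_mult set \<Rightarrow> bool" where
  "abundant U \<longleftrightarrow> subsemigroup U \<and>
     (\<forall>a\<in>U. (\<exists>e\<in>U. idem e \<and> Rstar U e a) \<and> (\<exists>e\<in>U. idem e \<and> Lstar U e a))"

definition adequate :: "'a::semigroup_mult set \<Rightarrow> bool" where
  "adequate U \<longleftrightarrow> abundant U \<and>
     (\<forall>e\<in>U. \<forall>f\<in>U. idem e \<longrightarrow> idem f \<longrightarrow> e * f = f * e)"

definition left_adequate :: "'a::semigroup_mult set \<Rightarrow> bool" where
  "left_adequate U \<longleftrightarrow> abundant U \<and>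
     (\<forall>a\<in>U. \<exists>!e. e \<in> U \<and> idem e \<and> Rstar U e a)"

definition star_subsemigroup :: "'a::semigroup_mult set \<Rightarrow> bool" where
  "star_subsemigroup U \<longleftrightarrow> subsemigroup U \<and> abundant U \<and>
     (\<forall>a\<in>U. \<forall>b\<in>U. Lstar U a b = Lstar UNIV a b) \<and>
     (\<forall>a\<in>U. \<forall>b\<in>U. Rstar U a b = Rstar UNIV a b)"

definition aplus :: "'a::semigroup_mult set \<Rightarrow> 'a \<Rightarrow> 'a" where
  "aplus U a = (THE e. e \<in> U \<and> idem e \<and> Rstar U e a)"

definition astar :: "'a::semigroup_mult set \<Rightarrow> 'a \<Rightarrow> 'a" where
  "astar U a = (THE e. e \<in> U \<and> idem e \<and> Lstar U e a)"

definition decomp :: "'a::semigroup_mult set \<Rightarrow> 'a \<Rightarrow> 'a \<Rightarrow> 'a \<Rightarrow> 'a \<Rightarrow> bool" where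
  "decomp S0 x xb e f \<longleftrightarrow> xb \<in> S0 \<and> idem e \<and> idem f \<and> x = e * xb * f \<and>
     greenL e (aplus S0 xb) \<and> greenR f (astar S0 xb)"

definition adequate_transversal :: "'a::semigroup_mult set \<Rightarrow> bool" where
  "adequate_transversal S0 \<longleftrightarrow> abundant (UNIV :: 'a set) \<and> adequate S0 \<and>
     star_subsemigroup S0 \<and> (\<forall>x. \<exists>!xb. \<exists>e f. decomp S0 x xb e f)"

definition bar :: "'a::semigroup_mult set \<Rightarrow> 'a \<Rightarrow> 'a" where
  "bar S0 x = (THE xb. \<exists>e f. decomp S0 x xb e f)"

definition e_of :: "'a::semigroup_mult set \<Rightarrow> 'a \<Rightarrow> 'a" where
  "e_of S0 x = (THE e. \<exists>f. decomp S0 x (bar S0 x) e f)"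

definition f_of :: "'a::semigroup_mult set \<Rightarrow> 'a \<Rightarrow> 'a" where
  "f_of S0 x = (THE f. \<exists>e. decomp S0 x (bar S0 x) e f)"

end

theory Submission
  imports Defs
begin

lemma astar_props:
  assumes ad: "adequate S0" and a: "a \<in> S0"
  shows "astar S0 a \<in> S0 \<and> idem (astar S0 a) \<and> Lstar S0 (astar S0 a) a"
proof -
  have ex: "\<exists>e\<in>S0. idem e \<and> Lstar S0 e a" using ad a unfolding adequate_def abundant_def by blast
  have un: "e = f" if "e \<in> S0" "idem e" "Lstar S0 e a" "f \<in> S0" "idem f" "Lstar S0 f a" for e f
  proof -
    have oe: "Some e \<in> one_ext S0" "None \<in> one_ext S0" "Some f \<in> one_ext S0"
      using that unfolding one_ext_def by auto
    have "rmul e (Some e) = rmul e None" using that(2) by (simp add: idem_def)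
    hence "rmul a (Some e) = rmul a None" using that(3) oe unfolding Lstar_def by blast
    hence "rmul f (Some e) = rmul f None" using that(6) oe unfolding Lstar_def by blast
    hence fe: "f * e = f" by simp
    have "rmul f (Some f) = rmul f None" using that(5) by (simp add: idem_def)
    hence "rmul a (Some f) = rmul a None" using that(6) oe unfolding Lstar_def by blast
    hence "rmul e (Some f) = rmul e None" using that(3) oe unfolding Lstar_def by blast
    hence ef: "e * f = e" by simp
    have "e * f = f * e" using ad that unfolding adequate_def by blast
    thus ?thesis using fe ef by simp
  qed
  have "\<exists>!e. e \<in> S0 \<and> idem e \<and> Lstar S0 e a" using ex un by blast
  from theI'[OF this] show ?thesis unfolding astar_def .
qed

lemma aplus_props:
  assumes ad: "adequate S0" and a: "a \<in> S0"
  shows "aplus S0 a \<in> S0 \<and> idem (aplus S0 a) \<and> Rstar S0 (aplus S0 a) a"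
proof -
  have ex: "\<exists>e\<in>S0. idem e \<and> Rstar S0 e a" using ad a unfolding adequate_def abundant_def by blast
  have un: "e = f" if "e \<in> S0" "idem e" "Rstar S0 e a" "f \<in> S0" "idem f" "Rstar S0 f a" for e f
  proof -
    have oe: "Some e \<in> one_ext S0" "None \<in> one_ext S0" "Some f \<in> one_ext S0"
      using that unfolding one_ext_def by auto
    have "lmul (Some e) e = lmul None e" using that(2) by (simp add: idem_def)
    hence "lmul (Some e) a = lmul None a" using that(3) oe unfolding Rstar_def by blast
    hence "lmul (Some e) f = lmul None f" using that(6) oe unfolding Rstar_def by blast
    hence fe: "e * f = f" by simp
    have "lmul (Some f) f = lmul None f" using that(5) by (simp add: idem_def)
    hence "lmul (Some f) a = lmul None a" using that(6) oe unfolding Rstar_def by blast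
    hence "lmul (Some f) e = lmul None e" using that(3) oe unfolding Rstar_def by blast
    hence ef: "f * e = e" by simp
    have "e * f = f * e" using ad that unfolding adequate_def by blast
    thus ?thesis using fe ef by simp
  qed
  have "\<exists>!e. e \<in> S0 \<and> idem e \<and> Rstar S0 e a" using ex un by blast
  from theI'[OF this] show ?thesis unfolding aplus_def .
qed

lemma a_astar: "adequate S0 \<Longrightarrow> a \<in> S0 \<Longrightarrow> a * astar S0 a = a"
proof -
  assume ad: "adequate S0" and a: "a \<in> S0"
  let ?s = "astar S0 a"
  have p: "?s \<in> S0" "idem ?s" "Lstar S0 ?s a" using astar_props[OF ad a] by auto
  have oe: "Some ?s \<in> one_ext S0" "None \<in> one_ext S0" using p unfolding one_ext_def by auto
  have "rmul ?s (Some ?s) = rmul ?s None" using p(2) by (simp add: idem_def)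
  hence "rmul a (Some ?s) = rmul a None" using p(3) oe unfolding Lstar_def by blast
  thus ?thesis by simp
qed

lemma aplus_a: "adequate S0 \<Longrightarrow> a \<in> S0 \<Longrightarrow> aplus S0 a * a = a"
proof -
  assume ad: "adequate S0" and a: "a \<in> S0"
  let ?s = "aplus S0 a"
  have p: "?s \<in> S0" "idem ?s" "Rstar S0 ?s a" using aplus_props[OF ad a] by auto
  have oe: "Some ?s \<in> one_ext S0" "None \<in> one_ext S0" using p unfolding one_ext_def by auto
  have "lmul (Some ?s) ?s = lmul None ?s" using p(2) by (simp add: idem_def)
  hence "lmul (Some ?s) a = lmul None a" using p(3) oe unfolding Rstar_def by blast
  thus ?thesis by simp
qed

lemma greenR_idem:
  assumes "idem f" "idem g" "greenR f g"
  shows "g * f = f \<and> f * g = g"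
proof -
  obtain u v where uv: "f = rmul g u" "g = rmul f v" using assms(3) unfolding greenR_def by blast
  have "g * f = f" using uv(1) assms(2) by (cases u) (auto simp: idem_def mult.assoc[symmetric])
  moreover have "f * g = g" using uv(2) assms(1) by (cases v) (auto simp: idem_def mult.assoc[symmetric])
  ultimately show ?thesis by simp
qed

lemma greenL_idem:
  assumes "idem f" "idem g" "greenL f g"
  shows "f * g = f \<and> g * f = g"
proof -
  obtain u v where uv: "f = lmul u g" "g = lmul v f" using assms(3) unfolding greenL_def by blast
  have "f * g = f" using uv(1) assms(2) by (cases u) (auto simp: idem_def mult.assoc)
  moreover have "g * f = g" using uv(2) assms(1) by (cases v) (auto simp: idem_def mult.assoc)
  ultimately show ?thesis by simp
qed

lemma f_unique:
  assumes la: "left_adequate (UNIV :: 'a::semigroup_mult set)" and ad: "adequate S0"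
    and d: "decomp S0 x a e (f::'a)"
  shows "f = astar S0 a"
proof -
  let ?s = "astar S0 a"
  have a: "a \<in> S0" and fi: "idem f" and gr: "greenR f ?s" using d unfolding decomp_def by auto
  have si: "idem ?s" using astar_props[OF ad a] by auto
  from greenR_idem[OF fi si gr] have h: "?s * f = f" "f * ?s = ?s" by auto
  have rs: "Rstar UNIV f ?s" unfolding Rstar_def
  proof (intro conjI ballI)
    fix u w :: "'a option"
    show "(lmul u f = lmul w f) = (lmul u ?s = lmul w ?s)"
    proof
      assume "lmul u f = lmul w f"
      hence "lmul u f * ?s = lmul w f * ?s" by simp
      thus "lmul u ?s = lmul w ?s" using h by (cases u; cases w) (auto simp: mult.assoc)
    next
      assume "lmul u ?s = lmul w ?s"
      hence "lmul u ?s * f = lmul w ?s * f" by simp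
      thus "lmul u f = lmul w f" using h by (cases u; cases w) (auto simp: mult.assoc)
    qed
  qed auto
  have rr: "Rstar UNIV ?s ?s" unfolding Rstar_def by auto
  have "\<exists>!e. e \<in> UNIV \<and> idem e \<and> Rstar UNIV e ?s" using la unfolding left_adequate_def by blast
  thus ?thesis using rs rr fi si by blast
qed

lemma e_unique:
  assumes la: "left_adequate (UNIV :: 'a::semigroup_mult set)" and at: "adequate_transversal S0"
    and d: "decomp S0 x a e (f::'a)"
  shows "x = e * a \<and> (\<forall>e' f'. decomp S0 x a e' f' \<longrightarrow> e' = e)"
proof -
  have ad: "adequate S0" and ss: "star_subsemigroup S0" using at unfolding adequate_transversal_def by auto
  have a: "a \<in> S0" using d unfolding decomp_def by auto
  have xe: "x = e * a" if "decomp S0 x a e f" for e f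
  proof -
    have "f = astar S0 a" using f_unique[OF la ad that] .
    thus ?thesis using that a_astar[OF ad a] unfolding decomp_def by (simp add: mult.assoc)
  qed
  let ?p = "aplus S0 a"
  have pp: "?p \<in> S0" "idem ?p" "Rstar S0 ?p a" using aplus_props[OF ad a] by auto
  have rU: "Rstar UNIV ?p a" using ss pp a unfolding star_subsemigroup_def by blast
  have "e' = e" if "decomp S0 x a e' f'" for e' f'
  proof -
    have i: "idem e" "idem e'" "greenL e ?p" "greenL e' ?p" using d that unfolding decomp_def by auto
    have h1: "e * ?p = e" using greenL_idem[OF i(1) pp(2) i(3)] by auto
    have h2: "e' * ?p = e'" using greenL_idem[OF i(2) pp(2) i(4)] by auto
    have "e * a = e' * a" using xe[OF d] xe[OF that] by simp
    hence "lmul (Some e) a = lmul (Some e') a" by simp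
    hence "lmul (Some e) ?p = lmul (Some e') ?p" using rU unfolding Rstar_def one_ext_def by blast
    thus ?thesis using h1 h2 by simp
  qed
  thus ?thesis using xe[OF d] by blast
qed

theorem corollary2p2:
  fixes S0 :: "'a::semigroup_mult set"
  assumes "left_adequate (UNIV :: 'a set)"
    and "adequate_transversal S0"
  shows "\<forall>x. f_of S0 x = f_of S0 (bar S0 x) \<and> x = e_of S0 x * bar S0 x"
proof
  fix x
  have la: "left_adequate (UNIV :: 'a set)" and at: "adequate_transversal S0" by fact+
  have ad: "adequate S0" using at unfolding adequate_transversal_def by auto
  have ex1: "\<And>y. \<exists>!xb. \<exists>e f. decomp S0 y xb e f" using at unfolding adequate_transversal_def by auto
  have bx: "\<exists>e f. decomp S0 y (bar S0 y) e f" for y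
    using theI'[OF ex1[of y]] unfolding bar_def .
  have fo: "f_of S0 y = astar S0 (bar S0 y)" for y
  proof -
    obtain e f where d: "decomp S0 y (bar S0 y) e f" using bx by blast
    have "\<exists>!f. \<exists>e. decomp S0 y (bar S0 y) e f"
      using d f_unique[OF la ad] by blast
    from theI'[OF this] obtain e' where "decomp S0 y (bar S0 y) e' (f_of S0 y)"
      unfolding f_of_def by blast
    thus ?thesis using f_unique[OF la ad] by blast
  qed
  obtain e f where d: "decomp S0 x (bar S0 x) e f" using bx by blast
  let ?a = "bar S0 x"
  have a: "?a \<in> S0" using d unfolding decomp_def by auto
  have "decomp S0 ?a ?a (aplus S0 ?a) (astar S0 ?a)"
    unfolding decomp_def using aplus_props[OF ad a] astar_props[OF ad a]
      a_astar[OF ad a] aplus_a[OF ad a] a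
    by (auto simp: greenL_def greenR_def intro: exI[of _ None])
  hence "bar S0 ?a = ?a" using ex1[of ?a] bx[of ?a] by blast
  hence f1: "f_of S0 x = f_of S0 ?a" using fo by simp
  have "\<exists>!e. \<exists>f. decomp S0 x ?a e f" using d e_unique[OF la at] by blast
  from theI'[OF this] obtain f' where "decomp S0 x ?a (e_of S0 x) f'" unfolding e_of_def by blast
  hence "x = e_of S0 x * ?a" using e_unique[OF la at] by blast
  with f1 show "f_of S0 x = f_of S0 (bar S0 x) \<and> x = e_of S0 x * bar S0 x" by simp
qed

end
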